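(* $E^{\partial}_{FTP}$ is sound and complete for bisimilarity on $T(\Sigma^{\partial}_{FTP})$: for all closed $s,t\in T(\Sigma^{\partial}_{FTP})$, $E^{\partial}_{FTP}\vdash s=t$ if and only if $s\sim t$.
   Context: Fix a finite nonempty set $\mathcal A$ of actions, a finite set $\mathcal P$ of predicates, a subset $\mathcal P^I\subseteq\mathcal P$ of implicit predicates, and for each $P\in\mathcal P^I$ a set $\mathcal A_P\subseteq\mathcal A$. $\Sigma^\partial_{FTP}$ consists of $\delta$, constants $\kappa_P$ ($P\in\mathcal P$), prefixes $a.\_$ ($a\in\mathcal A$), binary $+$, and unary $\partial_{\mathcal B,\mathcal Q}$ for all $\mathcal B\subseteq\mathcal A$, $\mathcal Q\subseteq\mathcal P$. Semantics on closed terms: the least relations closed under: $a.x\xrightarrow{a}x$; $x\xrightarrow{a}x'\Rightarrow x+y\xrightarrow{a}x'$; $y\xrightarrow{a}y'\Rightarrow x+y\xrightarrow{a}y'$; $P\kappa_P$; $Px\Rightarrow P(x+y)$; $Py\Rightarrow P(x+y)$; $Px\Rightarrow P(a.x)$ for $P\in\mathcal P^I$, $a\in\mathcal A_P$; $x\xrightarrow{a}x'\Rightarrow\partial_{\mathcal B,\mathcal Q}(x)\xrightarrow{a}\partial_{\emptyset,\mathcal Q\cap\mathcal P^I}(x')$ if $a\notin\mathcal B$; $Px\Rightarrow P(\partial_{\mathcal B,\mathcal Q}(x))$ if $P\notin\mathcal Q$. Bisimulation: symmetric $R$ with $(s,t)\in R$, $s\xrightarrow{a}s'$ implying $t\xrightarrow{a}t'$,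 $(s',t')\in R$, and $Ps$ implying $Pt$; $\sim$ is the union of all bisimulations. $E^\partial_{FTP}$ consists of: $x+y=y+x$; $(x+y)+z=x+(y+z)$; $x+x=x$; $x+\delta=x$; $a.(x+\kappa_P)=a.(x+\kappa_P)+\kappa_P$ ($P\in\mathcal P^I$, $a\in\mathcal A_P$); $\partial_{\mathcal B,\mathcal Q}(\delta)=\delta$; $\partial_{\mathcal B,\mathcal Q}(\kappa_P)=\delta$ if $P\in\mathcal Q$; $\partial_{\mathcal B,\mathcal Q}(\kappa_P)=\kappa_P$ if $P\notin\mathcal Q$; $\partial_{\mathcal B,\mathcal Q}(a.x)=\sum_{P\notin\mathcal Q,\,P(a.x)}\kappa_P$ if $a\in\mathcal B$ (schema: for each closed instance of $x$ the sum ranges over predicates $P\notin\mathcal Q$ satisfied by $a.x$); $\partial_{\mathcal B,\mathcal Q}(a.x)=\partial_{\emptyset,\mathcal Q}(a.x)$ if $a\notin\mathcal B$; $\partial_{\emptyset,\mathcal Q}(a.x)=a.\partial_{\emptyset,\mathcal Q\cap\mathcal P^I}(x)$; $\partial_{\mathcal B,\mathcal Q}(x+y)=\partial_{\mathcal B,\mathcal Q}(x)+\partial_{\mathcal B,\mathcal Q}(y)$. $\vdash$ is derivability in equational logic. *)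

theory Defs
  imports Main
begin

datatype ('a, 'p) ftp =
    Delta
  | Kappa 'p
  | Pre 'a "('a, 'p) ftp"
  | Plus "('a, 'p) ftp" "('a, 'p) ftp"
  | Enc "'a set" "'p set" "('a, 'p) ftp"

inductive step :: "'p set \<Rightarrow> ('a, 'p) ftp \<Rightarrow> 'a \<Rightarrow> ('a, 'p) ftp \<Rightarrow> bool"
  for PI :: "'p set" where
  step_pre: "step PI (Pre a x) a x"
| step_plusL: "step PI x a x' \<Longrightarrow> step PI (Plus x y) a x'"
| step_plusR: "step PI y a y' \<Longrightarrow> step PI (Plus x y) a y'"
| step_enc: "step PI x a x' \<Longrightarrow> a \<notin> B \<Longrightarrow> step PI (Enc B Q x) a (Enc {} (Q \<inter> PI) x')"

inductive holds :: "'p set \<Rightarrow> ('p \<Rightarrow> 'a set) \<Rightarrow> 'p \<Rightarrow> ('a, 'p) ftp \<Rightarrow> bool"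
  for PI :: "'p set" and AP :: "'p \<Rightarrow> 'a set" where
  holds_kappa: "holds PI AP P (Kappa P)"
| holds_plusL: "holds PI AP P x \<Longrightarrow> holds PI AP P (Plus x y)"
| holds_plusR: "holds PI AP P y \<Longrightarrow> holds PI AP P (Plus x y)"
| holds_pre: "holds PI AP P x \<Longrightarrow> P \<in> PI \<Longrightarrow> a \<in> AP P \<Longrightarrow> holds PI AP P (Pre a x)"
| holds_enc: "holds PI AP P x \<Longrightarrow> P \<notin> Q \<Longrightarrow> holds PI AP P (Enc B Q x)"

definition is_bisimulation ::
  "'p set \<Rightarrow> ('p \<Rightarrow> 'a set) \<Rightarrow> (('a, 'p) ftp \<Rightarrow> ('a, 'p) ftp \<Rightarrow> bool) \<Rightarrow> bool" where
  "is_bisimulation PI AP R \<longleftrightarrow>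
     (\<forall>s t. R s t \<longrightarrow> R t s) \<and>
     (\<forall>s t. R s t \<longrightarrow>
        (\<forall>a s'. step PI s a s' \<longrightarrow> (\<exists>t'. step PI t a t' \<and> R s' t')) \<and>
        (\<forall>P. holds PI AP P s \<longrightarrow> holds PI AP P t))"

definition bisim :: "'p set \<Rightarrow> ('p \<Rightarrow> 'a set) \<Rightarrow> ('a, 'p) ftp \<Rightarrow> ('a, 'p) ftp \<Rightarrow> bool" where
  "bisim PI AP s t \<longleftrightarrow> (\<exists>R. is_bisimulation PI AP R \<and> R s t)"

fun sumK :: "'p list \<Rightarrow> ('a, 'p) ftp" where
  "sumK [] = Delta"
| "sumK [P] = Kappa P"
| "sumK (P # ps) = Plus (Kappa P) (sumK ps)"

inductive axiom :: "'p set \<Rightarrow> ('p \<Rightarrow> 'a set) \<Rightarrow> ('a, 'p) ftp \<Rightarrow> ('a, 'p) ftp \<Rightarrow> bool"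
  for PI :: "'p set" and AP :: "'p \<Rightarrow> 'a set" where
  ax_comm: "axiom PI AP (Plus x y) (Plus y x)"
| ax_assoc: "axiom PI AP (Plus (Plus x y) z) (Plus x (Plus y z))"
| ax_idem: "axiom PI AP (Plus x x) x"
| ax_delta: "axiom PI AP (Plus x Delta) x"
| ax_impl: "P \<in> PI \<Longrightarrow> a \<in> AP P \<Longrightarrow>
    axiom PI AP (Pre a (Plus x (Kappa P))) (Plus (Pre a (Plus x (Kappa P))) (Kappa P))"
| ax_enc_delta: "axiom PI AP (Enc B Q Delta) Delta"
| ax_enc_kappa_in: "P \<in> Q \<Longrightarrow> axiom PI AP (Enc B Q (Kappa P)) Delta"
| ax_enc_kappa_out: "P \<notin> Q \<Longrightarrow> axiom PI AP (Enc B Q (Kappa P)) (Kappa P)"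
| ax_enc_pre_in: "a \<in> B \<Longrightarrow> distinct ps \<Longrightarrow>
    set ps = {P. P \<notin> Q \<and> holds PI AP P (Pre a x)} \<Longrightarrow>
    axiom PI AP (Enc B Q (Pre a x)) (sumK ps)"
| ax_enc_pre_out: "a \<notin> B \<Longrightarrow> axiom PI AP (Enc B Q (Pre a x)) (Enc {} Q (Pre a x))"
| ax_enc_pre_empty: "axiom PI AP (Enc {} Q (Pre a x)) (Pre a (Enc {} (Q \<inter> PI) x))"
| ax_enc_plus: "axiom PI AP (Enc B Q (Plus x y)) (Plus (Enc B Q x) (Enc B Q y))"

inductive derivable :: "'p set \<Rightarrow> ('p \<Rightarrow> 'a set) \<Rightarrow> ('a, 'p) ftp \<Rightarrow> ('a, 'p) ftp \<Rightarrow> bool"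
  for PI :: "'p set" and AP :: "'p \<Rightarrow> 'a set" where
  der_ax: "axiom PI AP s t \<Longrightarrow> derivable PI AP s t"
| der_refl: "derivable PI AP s s"
| der_sym: "derivable PI AP s t \<Longrightarrow> derivable PI AP t s"
| der_trans: "derivable PI AP s t \<Longrightarrow> derivable PI AP t u \<Longrightarrow> derivable PI AP s u"
| der_pre: "derivable PI AP s t \<Longrightarrow> derivable PI AP (Pre a s) (Pre a t)"
| der_plus: "derivable PI AP s t \<Longrightarrow> derivable PI AP s' t' \<Longrightarrow>
    derivable PI AP (Plus s s') (Plus t t')"
| der_enc: "derivable PI AP s t \<Longrightarrow> derivable PI AP (Enc B Q s) (Enc B Q t)"

end

theory Submission
  imports Defs
begin

inductive_simps step_Delta: "step PI Delta a y"
inductive_simps step_Kappa: "step PI (Kappa P) a y"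
inductive_simps step_Pre: "step PI (Pre b x) a y"
inductive_simps step_Plus: "step PI (Plus x z) a y"
inductive_simps step_Enc: "step PI (Enc B Q x) a y"
lemmas step_simps = step_Delta step_Kappa step_Pre step_Plus step_Enc

inductive_simps holds_Delta: "holds PI AP P Delta"
inductive_simps holds_Kappa: "holds PI AP P (Kappa P')"
inductive_simps holds_Pre: "holds PI AP P (Pre b x)"
inductive_simps holds_Plus: "holds PI AP P (Plus x z)"
inductive_simps holds_Enc: "holds PI AP P (Enc B Q x)"
lemmas holds_simps = holds_Delta holds_Kappa holds_Pre holds_Plus holds_Enc

lemma der_trans_calc[trans]: "derivable PI AP s t \<Longrightarrow> derivable PI AP t u \<Longrightarrow> derivable PI AP s u"
  by (rule der_trans)

fun summands :: "('a, 'p) ftp \<Rightarrow> ('a, 'p) ftp set" where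
  "summands Delta = {}"
| "summands (Plus x y) = summands x \<union> summands y"
| "summands t = {t}"

context
  fixes PI :: "'p set" and AP :: "'p \<Rightarrow> 'a set"
begin

abbreviation D :: "('a, 'p) ftp \<Rightarrow> ('a, 'p) ftp \<Rightarrow> bool" where
  "D s t \<equiv> derivable PI AP s t"

abbreviation B :: "('a, 'p) ftp \<Rightarrow> ('a, 'p) ftp \<Rightarrow> bool" where
  "B s t \<equiv> bisim PI AP s t"

subsection \<open>Soundness\<close>

lemma bisim_sym: "B s t \<Longrightarrow> B t s"
  unfolding bisim_def is_bisimulation_def by blast

lemma bisim_step: "B s t \<Longrightarrow> step PI s a s' \<Longrightarrow> \<exists>t'. step PI t a t' \<and> B s' t'"
  unfolding bisim_def is_bisimulation_def by blast

lemma bisim_holds: "B s t \<Longrightarrow> holds PI AP P s \<Longrightarrow> holds PI AP P t"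
  unfolding bisim_def is_bisimulation_def by blast

lemma bisim_coind:
  assumes "R s t"
    and sym: "\<And>x y. R x y \<Longrightarrow> R y x"
    and st: "\<And>x y a x'. R x y \<Longrightarrow> step PI x a x' \<Longrightarrow> \<exists>y'. step PI y a y' \<and> (R x' y' \<or> B x' y')"
    and hl: "\<And>x y P. R x y \<Longrightarrow> holds PI AP P x \<Longrightarrow> holds PI AP P y"
  shows "B s t"
proof -
  have "is_bisimulation PI AP (\<lambda>x y. R x y \<or> B x y)"
    unfolding is_bisimulation_def
  proof (intro conjI allI impI)
    fix x y assume "R x y \<or> B x y" then show "R y x \<or> B y x" using sym bisim_sym by blast
  next
    fix x y a x' assume "R x y \<or> B x y" "step PI x a x'"
    then show "\<exists>y'. step PI y a y' \<and> (R x' y' \<or> B x' y')" using st bisim_step by blast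
  next
    fix x y P assume "R x y \<or> B x y" "holds PI AP P x"
    then show "holds PI AP P y" using hl bisim_holds by blast
  qed
  then show ?thesis unfolding bisim_def using assms(1) by blast
qed

lemma bisim_refl: "B s s"
  by (rule bisim_coind[where R="(=)"]) auto

lemma bisim_trans: "B s t \<Longrightarrow> B t u \<Longrightarrow> B s u"
  apply (rule bisim_coind[where R="\<lambda>x z. \<exists>y. B x y \<and> B y z"])
     apply blast
    apply (meson bisim_sym)
   apply (elim exE conjE)
   apply (drule (1) bisim_step, elim exE conjE)
   apply (drule (1) bisim_step, blast)
  apply (blast intro: bisim_holds)
  done

lemma bisim_match:
  assumes "\<And>a x'. step PI s a x' \<Longrightarrow> \<exists>y'. step PI t a y' \<and> B x' y'"
    and "\<And>a y'. step PI t a y' \<Longrightarrow> \<exists>x'. step PI s a x' \<and> B x' y'"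
    and "\<And>P. holds PI AP P s \<longleftrightarrow> holds PI AP P t"
  shows "B s t"
  apply (rule bisim_coind[where R="\<lambda>x y. (x = s \<and> y = t) \<or> (x = t \<and> y = s)"])
  using assms bisim_sym by blast+

lemma bisim_same:
  assumes "\<And>a x'. step PI s a x' \<longleftrightarrow> step PI t a x'"
    and "\<And>P. holds PI AP P s \<longleftrightarrow> holds PI AP P t"
  shows "B s t"
  using assms bisim_match bisim_refl by blast

lemma bisim_pre: "B s t \<Longrightarrow> B (Pre a s) (Pre a t)"
  by (rule bisim_match) (auto simp: step_simps holds_simps intro: bisim_holds bisim_sym)

lemma bisim_plus: "B s t \<Longrightarrow> B s' t' \<Longrightarrow> B (Plus s s') (Plus t t')"
  apply (rule bisim_match)
  apply (auto simp: step_simps holds_simps intro: bisim_holds bisim_sym dest: bisim_step)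
   apply (meson bisim_step bisim_sym)+
  done

lemma bisim_enc: "B s t \<Longrightarrow> B (Enc Bs Q s) (Enc Bs Q t)"
  apply (rule bisim_coind[where R="\<lambda>x y. \<exists>Bs Q s t. x = Enc Bs Q s \<and> y = Enc Bs Q t \<and> B s t"])
     apply blast
    apply (blast intro: bisim_sym)
   apply (clarsimp simp: step_Enc)
   apply (drule (1) bisim_step, blast)
  apply (auto simp: holds_Enc intro: bisim_holds)
  done

lemma sumK_holds: "holds PI AP P (sumK ps) \<longleftrightarrow> P \<in> set ps"
  by (induction ps rule: sumK.induct) (auto simp: holds_simps)

lemma sumK_step: "\<not> step PI (sumK ps) a x"
  by (induction ps rule: sumK.induct) (auto simp: step_simps)

lemma axiom_sound: "axiom PI AP s t \<Longrightarrow> B s t"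
proof (induction rule: axiom.induct)
  case (ax_enc_pre_in a Bs ps Q x)
  then show ?case by (intro bisim_same) (auto simp: step_simps holds_simps sumK_holds sumK_step)
qed (intro bisim_same; auto simp: step_simps holds_simps)+

lemma soundness: "D s t \<Longrightarrow> B s t"
proof (induction rule: derivable.induct)
  case (der_ax s t) then show ?case by (rule axiom_sound)
next
  case (der_refl s) then show ?case by (rule bisim_refl)
next
  case (der_sym s t) show ?case using der_sym.IH by (rule bisim_sym)
next
  case (der_trans s t u) show ?case using der_trans.IH by (rule bisim_trans)
next
  case (der_pre s t a) show ?case using der_pre.IH by (rule bisim_pre)
next
  case (der_plus s t s' t') show ?case using der_plus.IH by (rule bisim_plus)
next
  case (der_enc s t Bs Q) show ?case using der_enc.IH by (rule bisim_enc)
qed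

subsection \<open>Completeness\<close>

fun nf :: "('a, 'p) ftp \<Rightarrow> bool" where
  "nf Delta = True"
| "nf (Kappa P) = True"
| "nf (Pre a x) = (nf x \<and> (\<forall>P. holds PI AP P x \<longrightarrow> Kappa P \<in> summands x))"
| "nf (Plus x y) = (nf x \<and> nf y)"
| "nf (Enc Bs Q x) = False"

definition sat :: "('a, 'p) ftp \<Rightarrow> bool" where
  "sat u \<longleftrightarrow> nf u \<and> (\<forall>P. holds PI AP P u \<longrightarrow> Kappa P \<in> summands u)"

lemma L1: "step PI t a t' \<Longrightarrow> nf t \<Longrightarrow> Pre a t' \<in> summands t"
  by (induction rule: step.induct) auto

lemma L2: "Pre a x \<in> summands t \<Longrightarrow> step PI t a x"
  by (induction t) (auto intro: step.intros)

lemma L3: "Kappa P \<in> summands t \<Longrightarrow> holds PI AP P t"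
  by (induction t) (auto intro: holds.intros)

lemma L_nf_summ: "w \<in> summands u \<Longrightarrow> nf u \<Longrightarrow>
    (\<exists>P. w = Kappa P) \<or> (\<exists>a x. w = Pre a x \<and> sat x)"
  by (induction u) (auto simp: sat_def)

lemma L_size: "Pre a x \<in> summands u \<Longrightarrow> size x < size u"
  by (induction u) auto

lemma L4: "w \<in> summands t \<Longrightarrow> D (Plus t w) t"
proof (induction t)
  case (Plus x y)
  show ?case
  proof (cases "w \<in> summands x")
    case True
    have "D (Plus (Plus x y) w) (Plus x (Plus y w))" by (rule der_ax, rule ax_assoc)
    also have "D (Plus x (Plus y w)) (Plus x (Plus w y))"
      by (rule der_plus[OF der_refl der_ax[OF ax_comm]])
    also have "D (Plus x (Plus w y)) (Plus (Plus x w) y)"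
      by (rule der_sym[OF der_ax[OF ax_assoc]])
    also have "D (Plus (Plus x w) y) (Plus x y)"
      using Plus.IH(1)[OF True] by (rule der_plus[OF _ der_refl])
    finally show ?thesis .
  next
    case False
    then have "w \<in> summands y" using Plus.prems by auto
    have "D (Plus (Plus x y) w) (Plus x (Plus y w))" by (rule der_ax, rule ax_assoc)
    also have "D (Plus x (Plus y w)) (Plus x y)"
      using Plus.IH(2)[OF \<open>w \<in> summands y\<close>] by (rule der_plus[OF der_refl])
    finally show ?thesis .
  qed
qed (auto intro: der_ax ax_idem)

lemma L5: "(\<And>w. w \<in> summands u \<Longrightarrow> D (Plus t w) t) \<Longrightarrow> D (Plus t u) t"
proof (induction u)
  case Delta
  show ?case by (rule der_ax[OF ax_delta])
next
  case (Plus u1 u2)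
  have "D (Plus t (Plus u1 u2)) (Plus (Plus t u1) u2)"
    by (rule der_sym[OF der_ax[OF ax_assoc]])
  also have "D (Plus (Plus t u1) u2) (Plus t u2)"
    using Plus by (intro der_plus[OF _ der_refl]) auto
  also have "D (Plus t u2) t" using Plus by auto
  finally show ?case .
qed auto

lemma L6: "D (Plus t s) t \<Longrightarrow> D (Plus s t) s \<Longrightarrow> D s t"
proof -
  assume 1: "D (Plus t s) t" and 2: "D (Plus s t) s"
  have "D s (Plus s t)" using 2 by (rule der_sym)
  also have "D (Plus s t) (Plus t s)" by (rule der_ax[OF ax_comm])
  also note 1
  finally show ?thesis .
qed

lemma absorb: "D (Plus t w) t \<Longrightarrow> D w w' \<Longrightarrow> D (Plus t w') t"
proof -
  assume 1: "D (Plus t w) t" and 2: "D w w'"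
  have "D (Plus t w') (Plus t w)" by (rule der_plus[OF der_refl der_sym[OF 2]])
  also note 1
  finally show ?thesis .
qed

lemma completeness_sat: "sat s \<Longrightarrow> sat t \<Longrightarrow> B s t \<Longrightarrow> D s t"
proof (induction "size s" arbitrary: s t rule: less_induct)
  case less
  have nfs: "nf s" and nft: "nf t" using less.prems by (auto simp: sat_def)
  have A: "D (Plus t w) t" if w: "w \<in> summands s" for w
  proof -
    from L_nf_summ[OF w nfs] show ?thesis
    proof (elim disjE exE conjE)
      fix P assume "w = Kappa P"
      then have "holds PI AP P s" using L3 w by auto
      then have "holds PI AP P t" using bisim_holds less.prems(3) by blast
      then have "Kappa P \<in> summands t" using less.prems(2) by (auto simp: sat_def)
      then show ?thesis using L4 \<open>w = Kappa P\<close> by auto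
    next
      fix a x assume wx: "w = Pre a x" "sat x"
      then have "step PI s a x" using L2 w by auto
      then obtain y where y: "step PI t a y" "B x y" using bisim_step less.prems(3) by blast
      have yt: "Pre a y \<in> summands t" using L1[OF y(1) nft] .
      have "sat y" using L_nf_summ[OF yt nft] by auto
      have "size x < size s" using L_size w wx by auto
      then have "D x y" using less.hyps \<open>sat x\<close> \<open>sat y\<close> y(2) by blast
      then have "D (Pre a y) (Pre a x)" by (rule der_sym[OF der_pre])
      with L4[OF yt] have "D (Plus t (Pre a x)) t" by (rule absorb)
      then show ?thesis using wx by simp
    qed
  qed
  have Bt: "D (Plus s w) s" if w: "w \<in> summands t" for w
  proof -
    from L_nf_summ[OF w nft] show ?thesis
    proof (elim disjE exE conjE)
      fix P assume "w = Kappa P"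
      then have "holds PI AP P t" using L3 w by auto
      then have "holds PI AP P s" using bisim_holds bisim_sym less.prems(3) by blast
      then have "Kappa P \<in> summands s" using less.prems(1) by (auto simp: sat_def)
      then show ?thesis using L4 \<open>w = Kappa P\<close> by auto
    next
      fix a y assume wy: "w = Pre a y" "sat y"
      then have "step PI t a y" using L2 w by auto
      then obtain x where x: "step PI s a x" "B y x"
        using bisim_step bisim_sym less.prems(3) by blast
      have xs: "Pre a x \<in> summands s" using L1[OF x(1) nfs] .
      have "sat x" using L_nf_summ[OF xs nfs] by auto
      have "size x < size s" by (rule L_size[OF xs])
      then have "D x y" using less.hyps \<open>sat x\<close> \<open>sat y\<close> bisim_sym[OF x(2)] by blast
      then have "D (Pre a x) (Pre a y)" by (rule der_pre)
      with L4[OF xs] have "D (Plus s (Pre a y)) s" by (rule absorb)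
      then show ?thesis using wy by simp
    qed
  qed
  have 1: "D (Plus t s) t" by (rule L5) (rule A)
  have 2: "D (Plus s t) s" by (rule L5) (rule Bt)
  show ?case using 1 2 by (rule L6)
qed

lemma sumK_summands: "summands (sumK ps) = Kappa ` set ps"
  by (induction ps rule: sumK.induct) auto

lemma sumK_nf: "nf (sumK ps)"
  by (induction ps rule: sumK.induct) auto

lemma sumK_sat: "sat (sumK ps)"
  unfolding sat_def by (auto simp: sumK_nf sumK_holds sumK_summands)

lemma sat_plus: "sat x \<Longrightarrow> sat y \<Longrightarrow> sat (Plus x y)"
  unfolding sat_def by (auto simp: holds_Plus)

lemma sumK_absorb: "(\<And>P. P \<in> set ps \<Longrightarrow> D (Plus w (Kappa P)) w) \<Longrightarrow> D (Plus w (sumK ps)) w"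
  by (rule L5) (auto simp: sumK_summands)

end

lemma pre_sat:
  fixes PI :: "'p::finite set" and AP :: "'p \<Rightarrow> 'a set"
  assumes "sat PI AP x"
  shows "\<exists>w. sat PI AP w \<and> derivable PI AP (Pre a x) w"
proof -
  obtain ps where ps: "distinct ps" "set ps = {P. P \<in> PI \<and> a \<in> AP P \<and> holds PI AP P x}"
    using finite_distinct_list[of "{P. P \<in> PI \<and> a \<in> AP P \<and> holds PI AP P x}"] by auto
  define w where "w = Plus (Pre a x) (sumK ps)"
  have "derivable PI AP (Plus (Pre a x) (Kappa P)) (Pre a x)" if P: "P \<in> set ps" for P
  proof -
    have PP: "P \<in> PI" "a \<in> AP P" "holds PI AP P x" using P ps by auto
    then have "Kappa P \<in> summands x" using assms by (auto simp: sat_def)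
    then have d1: "derivable PI AP (Plus x (Kappa P)) x" by (rule L4)
    let ?x1 = "Plus x (Kappa P)"
    have "derivable PI AP (Plus (Pre a x) (Kappa P)) (Plus (Pre a ?x1) (Kappa P))"
      by (rule der_plus[OF der_pre[OF der_sym[OF d1]] der_refl])
    also have "derivable PI AP (Plus (Pre a ?x1) (Kappa P)) (Pre a ?x1)"
      by (rule der_sym[OF der_ax[OF ax_impl[where x=x and P=P and a=a and PI=PI and AP=AP, OF PP(1,2)]]])
    also have "derivable PI AP (Pre a ?x1) (Pre a x)"
      by (rule der_pre[OF d1])
    finally show ?thesis .
  qed
  then have "derivable PI AP (Plus (Pre a x) (sumK ps)) (Pre a x)"
    by (rule sumK_absorb)
  then have d: "derivable PI AP (Pre a x) w" unfolding w_def by (rule der_sym)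
  have "sat PI AP w"
    unfolding sat_def w_def
  proof (intro conjI allI impI)
    show "nf PI AP (Plus (Pre a x) (sumK ps))" using assms sumK_nf by (auto simp: sat_def)
  next
    fix P assume "holds PI AP P (Plus (Pre a x) (sumK ps))"
    then show "Kappa P \<in> summands (Plus (Pre a x) (sumK ps))"
      using ps by (auto simp: holds_simps sumK_holds sumK_summands)
  qed
  with d show ?thesis by blast
qed

lemma enc_nf:
  fixes PI :: "'p::finite set" and AP :: "'p \<Rightarrow> 'a set"
  assumes "nf PI AP u"
  shows "\<exists>v. sat PI AP v \<and> derivable PI AP (Enc Bs Q u) v"
  using assms
proof (induction u arbitrary: Bs Q)
  case Delta
  have "sat PI AP Delta" by (auto simp: sat_def holds_simps)
  then show ?case using der_ax[OF ax_enc_delta[of PI AP Bs Q]] by blast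
next
  case (Kappa P)
  have s1: "sat PI AP Delta" by (auto simp: sat_def holds_simps)
  have s2: "sat PI AP (Kappa P)" by (auto simp: sat_def holds_simps)
  show ?case
  proof (cases "P \<in> Q")
    case True show ?thesis by (rule exI[of _ Delta], rule conjI[OF s1 der_ax[OF ax_enc_kappa_in[OF True]]])
  next
    case False show ?thesis by (rule exI[of _ "Kappa P"], rule conjI[OF s2 der_ax[OF ax_enc_kappa_out[OF False]]])
  qed
next
  case (Pre a x)
  show ?case
  proof (cases "a \<in> Bs")
    case True
    obtain ps where ps: "distinct ps" "set ps = {P. P \<notin> Q \<and> holds PI AP P (Pre a x)}"
      using finite_distinct_list[of "{P. P \<notin> Q \<and> holds PI AP P (Pre a x)}"] by auto
    then show ?thesis using sumK_sat[of PI AP ps] der_ax[OF ax_enc_pre_in[OF True ps]] by blast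
  next
    case False
    from Pre obtain v0 where v0: "sat PI AP v0" "derivable PI AP (Enc {} (Q \<inter> PI) x) v0"
      by (metis nf.simps(3))
    obtain w where w: "sat PI AP w" "derivable PI AP (Pre a v0) w" using pre_sat[OF v0(1)] by blast
    have "derivable PI AP (Enc Bs Q (Pre a x)) (Enc {} Q (Pre a x))"
      by (rule der_ax[OF ax_enc_pre_out[OF False]])
    also have "derivable PI AP (Enc {} Q (Pre a x)) (Pre a (Enc {} (Q \<inter> PI) x))"
      by (rule der_ax[OF ax_enc_pre_empty])
    also have "derivable PI AP (Pre a (Enc {} (Q \<inter> PI) x)) (Pre a v0)"
      by (rule der_pre[OF v0(2)])
    also note w(2)
    finally show ?thesis using w(1) by blast
  qed
next
  case (Plus x y)
  from Plus obtain v1 where v1: "sat PI AP v1" "derivable PI AP (Enc Bs Q x) v1" by (metis nf.simps(4))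
  from Plus obtain v2 where v2: "sat PI AP v2" "derivable PI AP (Enc Bs Q y) v2" by (metis nf.simps(4))
  have "derivable PI AP (Enc Bs Q (Plus x y)) (Plus (Enc Bs Q x) (Enc Bs Q y))"
    by (rule der_ax[OF ax_enc_plus])
  also have "derivable PI AP (Plus (Enc Bs Q x) (Enc Bs Q y)) (Plus v1 v2)"
    by (rule der_plus[OF v1(2) v2(2)])
  finally show ?case using sat_plus[OF v1(1) v2(1)] by blast
next
  case (Enc B' Q' x)
  then show ?case by simp
qed

lemma normalize:
  fixes PI :: "'p::finite set" and AP :: "'p \<Rightarrow> 'a set"
  shows "\<exists>u. sat PI AP u \<and> derivable PI AP s u"
proof (induction s)
  case Delta
  have "sat PI AP Delta" by (auto simp: sat_def holds_simps)
  then show ?case using der_refl by blast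
next
  case (Kappa P)
  have "sat PI AP (Kappa P)" by (auto simp: sat_def holds_simps)
  then show ?case using der_refl by blast
next
  case (Pre a x)
  then obtain u where u: "sat PI AP u" "derivable PI AP x u" by blast
  obtain w where w: "sat PI AP w" "derivable PI AP (Pre a u) w" using pre_sat[OF u(1)] by blast
  show ?case using w der_trans[OF der_pre[OF u(2)] w(2)] by blast
next
  case (Plus x y)
  then obtain u1 u2 where "sat PI AP u1" "derivable PI AP x u1" "sat PI AP u2" "derivable PI AP y u2"
    by blast
  then show ?case using sat_plus der_plus by blast
next
  case (Enc Bs Q x)
  then obtain u where u: "sat PI AP u" "derivable PI AP x u" by blast
  then have "nf PI AP u" by (simp add: sat_def)
  then obtain v where v: "sat PI AP v" "derivable PI AP (Enc Bs Q u) v" using enc_nf by blast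
  show ?case using v der_trans[OF der_enc[OF u(2)] v(2)] by blast
qed

theorem corollary1:
  fixes PI :: "'p::finite set" and AP :: "'p \<Rightarrow> 'a::finite set"
    and s t :: "('a, 'p) ftp"
  shows "derivable PI AP s t \<longleftrightarrow> bisim PI AP s t"
proof
  assume "derivable PI AP s t"
  then show "bisim PI AP s t" by (rule soundness)
next
  assume st: "bisim PI AP s t"
  obtain u where u: "sat PI AP u" "derivable PI AP s u" using normalize by blast
  obtain v where v: "sat PI AP v" "derivable PI AP t v" using normalize by blast
  have "bisim PI AP u v"
    using bisim_trans[OF bisim_trans[OF bisim_sym[OF soundness[OF u(2)]] st] soundness[OF v(2)]] .
  then have "derivable PI AP u v" using completeness_sat u(1) v(1) by blast
  then show "derivable PI AP s t" using u(2) v(2) by (blast intro: der_trans der_sym)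
qed

end
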